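(* In the setting of the context, assume that $Q$ is a Poisson tensor. Then $Q-\lambda P$ is a Poisson pencil (i.e. $[Q,P]_S=0$) if and only if \[ \sum_{a=1}^k X'_a\wedge L_{Z_a}(P)=0 . \] In fact $[Q,P]_S=\sum_{a=1}^kX'_a\wedge L_{Z_a}(P)$.
   Context: $M$ is a smooth manifold of dimension $2n+k$ carrying two compatible Poisson tensors $P,P'$ (i.e. $P'-\lambda P$ is Poisson for every $\lambda$; equivalently the Schouten brackets $[P,P]_S,[P',P']_S,[P,P']_S$ vanish). Brackets: $\{f,g\}=\langle df,P\,dg\rangle$, $\{f,g\}'=\langle df,P'dg\rangle$; bivectors are viewed as maps $T^*M\to TM$. There are $k$ polynomial Casimirs of the pencil $H^{(j)}(\lambda)=\sum_{i=0}^{n_j}H^{(j)}_i\lambda^{n_j-i}$, i.e. $(P'-\lambda P)dH^{(j)}(\lambda)=0$ identically in $\lambda$, with $n_1+\dots+n_k=n$ and all $dH^{(j)}_s$ linearly independent at every point. $S$ is a symplectic leaf of $P$ (locally a level set of $H^{(1)}_0,\dots,H^{(k)}_0$), $U_S$ a tubular neighbourhood of $S$, and $Z_1,\dots,Z_k$ vector fields on $U_S$ spanning a distribution complementary to the tangent spaces of the symplectic leaves of $P$, normalized by $Z_a(H^{(b)}_0)=\delta_a^b$. Set $X'_a=P'dH^{(a)}_0$ and $Q=P'-\sum_{a=1}^kX'_a\wedge Z_a$, i.e. $Q(\alpha)=P'(\alpha)+\sum_a(\langle\alpha,X'_a\rangle Z_a-\langle\alpha,Z_a\rangle X'_a)$.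 "$Q-\lambda P$ is a Poisson pencil" means $Q-\lambda P$ is a Poisson tensor for every $\lambda$. *)

theory Defs
  imports "HOL-Analysis.Analysis"
begin

text \<open>Local coordinate calculus on an open domain U of R^N (N = CARD('n)).
  Functions are maps real^'n => real; vector fields real^'n => real^'n;
  bivector fields real^'n => real^'n^'n (components B x $ i $ j, viewed as maps
  T*M -> TM via alpha |-> B *v alpha); trivector fields real^'n => 'n => 'n => 'n => real.\<close>

definition pd :: "'n::finite \<Rightarrow> (real^'n \<Rightarrow> real) \<Rightarrow> real^'n \<Rightarrow> real" where
  "pd i f x = frechet_derivative f (at x) (axis i 1)"

fun Dl :: "'n::finite list \<Rightarrow> (real^'n \<Rightarrow> real) \<Rightarrow> real^'n \<Rightarrow> real" where
  "Dl [] f = f"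
| "Dl (i # is) f = pd i (Dl is f)"

definition cinf_on :: "(real^'n::finite) set \<Rightarrow> (real^'n \<Rightarrow> real) \<Rightarrow> bool" where
  "cinf_on U f \<longleftrightarrow> (\<forall>is. \<forall>x\<in>U. Dl is f differentiable (at x))"

definition grad :: "(real^'n::finite \<Rightarrow> real) \<Rightarrow> real^'n \<Rightarrow> real^'n" where
  "grad f x = (\<chi> s. pd s f x)"

definition vfield_on :: "(real^'n::finite) set \<Rightarrow> (real^'n \<Rightarrow> real^'n) \<Rightarrow> bool" where
  "vfield_on U V \<longleftrightarrow> (\<forall>i. cinf_on U (\<lambda>x. V x $ i))"

definition bivector_on :: "(real^'n::finite) set \<Rightarrow> (real^'n \<Rightarrow> real^'n^'n) \<Rightarrow> bool" where
  "bivector_on U B \<longleftrightarrow> (\<forall>i j. cinf_on U (\<lambda>x. B x $ i $ j)) \<and>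
     (\<forall>x\<in>U. \<forall>i j. B x $ i $ j = - B x $ j $ i)"

text \<open>Schouten bracket of two bivector fields in coordinates; with this sign
  convention [P,P] = 0 is the Jacobi identity for P and [X,P] relates to L_X P
  so that [X wedge Z, P] = L_X P wedge Z - X wedge L_Z P.\<close>
definition schouten :: "(real^'n::finite \<Rightarrow> real^'n^'n) \<Rightarrow> (real^'n \<Rightarrow> real^'n^'n)
    \<Rightarrow> real^'n \<Rightarrow> 'n \<Rightarrow> 'n \<Rightarrow> 'n \<Rightarrow> real" where
  "schouten A B x i j k =
     (let t = (\<lambda>i j k. \<Sum>l\<in>UNIV. A x $ l $ i * pd l (\<lambda>y. B y $ j $ k) x
                              + B x $ l $ i * pd l (\<lambda>y. A y $ j $ k) x)
      in t i j k + t j k i + t k i j)"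

definition poisson_on :: "(real^'n::finite) set \<Rightarrow> (real^'n \<Rightarrow> real^'n^'n) \<Rightarrow> bool" where
  "poisson_on U P \<longleftrightarrow> bivector_on U P \<and> (\<forall>x\<in>U. \<forall>i j k. schouten P P x i j k = 0)"

definition sharp :: "(real^'n::finite \<Rightarrow> real^'n^'n) \<Rightarrow> (real^'n \<Rightarrow> real) \<Rightarrow> real^'n \<Rightarrow> real^'n" where
  "sharp P H x = P x *v grad H x"

text \<open>X wedge Z, with (X wedge Z)(alpha) = <alpha,X> Z - <alpha,Z> X.\<close>
definition wedge2 :: "(real^'n::finite \<Rightarrow> real^'n) \<Rightarrow> (real^'n \<Rightarrow> real^'n) \<Rightarrow> real^'n \<Rightarrow> real^'n^'n" where
  "wedge2 X Z x = (\<chi> i j. X x $ i * Z x $ j - X x $ j * Z x $ i)"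

definition wedge3 :: "(real^'n::finite \<Rightarrow> real^'n) \<Rightarrow> (real^'n \<Rightarrow> real^'n^'n)
    \<Rightarrow> real^'n \<Rightarrow> 'n \<Rightarrow> 'n \<Rightarrow> 'n \<Rightarrow> real" where
  "wedge3 X B x i j k = X x $ i * B x $ j $ k + X x $ j * B x $ k $ i + X x $ k * B x $ i $ j"

definition lie_bv :: "(real^'n::finite \<Rightarrow> real^'n) \<Rightarrow> (real^'n \<Rightarrow> real^'n^'n) \<Rightarrow> real^'n \<Rightarrow> real^'n^'n" where
  "lie_bv Z P x = (\<chi> i j. \<Sum>l\<in>UNIV. Z x $ l * pd l (\<lambda>y. P y $ i $ j) x
                     - P x $ l $ j * pd l (\<lambda>y. Z y $ i) x
                     - P x $ i $ l * pd l (\<lambda>y. Z y $ j) x)"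

definition casimir_poly :: "('k \<Rightarrow> nat \<Rightarrow> real^'n::finite \<Rightarrow> real) \<Rightarrow> ('k \<Rightarrow> nat) \<Rightarrow> 'k \<Rightarrow> real
    \<Rightarrow> real^'n \<Rightarrow> real" where
  "casimir_poly H m a lam y = (\<Sum>i\<le>m a. H a i y * lam ^ (m a - i))"

end

theory Submission
  imports Defs
begin

lemma pd_has: "(f has_derivative f') (at x) \<Longrightarrow> pd i f x = f' (axis i 1)"
  unfolding pd_def using frechet_derivative_at by metis

lemma pd_hasD: "f differentiable (at x) \<Longrightarrow> (f has_derivative (\<lambda>v. frechet_derivative f (at x) v)) (at x)"
  using frechet_derivative_works by (metis eta_contract_eq)

lemma pd_add: "f differentiable (at x) \<Longrightarrow> g differentiable (at x) \<Longrightarrow>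
   pd i (\<lambda>y. f y + g y) x = pd i f x + pd i g x"
  unfolding pd_def by (rule pd_has[unfolded pd_def], intro has_derivative_add pd_hasD)

lemma pd_diff: "f differentiable (at x) \<Longrightarrow> g differentiable (at x) \<Longrightarrow>
   pd i (\<lambda>y. f y - g y) x = pd i f x - pd i g x"
  unfolding pd_def by (rule pd_has[unfolded pd_def], intro has_derivative_diff pd_hasD)

lemma pd_mult: "f differentiable (at x) \<Longrightarrow> g differentiable (at x) \<Longrightarrow>
   pd i (\<lambda>y. f y * g y) x = pd i f x * g x + f x * pd i g x"
proof -
  assume a: "f differentiable (at x)" "g differentiable (at x)"
  have "((\<lambda>y. f y * g y) has_derivative (\<lambda>h. f x * frechet_derivative g (at x) h + frechet_derivative f (at x) h * g x)) (at x)"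
    by (intro has_derivative_mult pd_hasD a)
  from pd_has[OF this] show ?thesis unfolding pd_def by simp
qed

lemma pd_sum: "finite S \<Longrightarrow> (\<And>a. a \<in> S \<Longrightarrow> f a differentiable (at x)) \<Longrightarrow>
   pd i (\<lambda>y. \<Sum>a\<in>S. f a y) x = (\<Sum>a\<in>S. pd i (f a) x)"
proof -
  assume a: "finite S" "\<And>a. a \<in> S \<Longrightarrow> f a differentiable (at x)"
  have "((\<lambda>y. \<Sum>a\<in>S. f a y) has_derivative (\<lambda>h. \<Sum>a\<in>S. frechet_derivative (f a) (at x) h)) (at x)"
    by (intro has_derivative_sum pd_hasD a)
  from pd_has[OF this] show ?thesis unfolding pd_def by simp
qed

lemma pd_const: "pd i (\<lambda>y. c) x = 0"
  by (rule trans[OF pd_has[OF has_derivative_const]]) simp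

lemma pd_local:
  assumes "open U" "x \<in> U" "\<And>y. y \<in> U \<Longrightarrow> f y = g y" "g differentiable (at x)"
  shows "pd i f x = pd i g x"
proof -
  have "(f has_derivative (\<lambda>v. frechet_derivative g (at x) v)) (at x)"
    by (rule has_derivative_transform_within_open[OF pd_hasD[OF assms(4)] assms(1,2)]) (use assms(3) in auto)
  from pd_has[OF this] pd_has[OF pd_hasD[OF assms(4)]] show ?thesis by simp
qed

lemma diff_local:
  assumes "open U" "x \<in> U" "\<And>y. y \<in> U \<Longrightarrow> f y = g y" "g differentiable (at x)"
  shows "f differentiable (at x)"
proof -
  have "(f has_derivative (\<lambda>v. frechet_derivative g (at x) v)) (at x)"
    by (rule has_derivative_transform_within_open[OF pd_hasD[OF assms(4)] assms(1,2)]) (use assms(3) in auto)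
  then show ?thesis unfolding differentiable_def by blast
qed

lemma cinf_diff0: "cinf_on U f \<Longrightarrow> x \<in> U \<Longrightarrow> f differentiable (at x)"
  unfolding cinf_on_def by (metis Dl.simps(1))
lemma cinf_diff1: "cinf_on U f \<Longrightarrow> x \<in> U \<Longrightarrow> pd l f differentiable (at x)"
  unfolding cinf_on_def by (metis Dl.simps)
lemma cinf_diff2: "cinf_on U f \<Longrightarrow> x \<in> U \<Longrightarrow> pd l (pd m f) differentiable (at x)"
  unfolding cinf_on_def by (metis Dl.simps)

lemma cinf_lin:
  assumes U: "open U" and f: "cinf_on U f" and g: "cinf_on U g"
  shows "cinf_on U (\<lambda>y. f y - c * g y)"
proof -
  have "\<forall>x\<in>U. Dl is (\<lambda>y. f y - c * g y) x = Dl is f x - c * Dl is g x \<and> Dl is (\<lambda>y. f y - c * g y) differentiable (at x)" for "is"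
  proof (induction "is")
    case Nil
    then show ?case using f g cinf_diff0 by (auto intro!: derivative_intros)
  next
    case (Cons i "is")
    have d: "\<And>x. x \<in> U \<Longrightarrow> Dl is f differentiable (at x) \<and> Dl is g differentiable (at x)
       \<and> Dl (i # is) f differentiable (at x) \<and> Dl (i # is) g differentiable (at x)"
      using f g unfolding cinf_on_def by blast
    have e: "Dl (i # is) (\<lambda>y. f y - c * g y) x = Dl (i # is) f x - c * Dl (i # is) g x" if "x \<in> U" for x
    proof -
      have "Dl (i # is) (\<lambda>y. f y - c * g y) x = pd i (\<lambda>y. Dl is f y - c * Dl is g y) x"
        using Cons.IH d that by (simp, intro pd_local[OF U that]) auto
      also have "\<dots> = Dl (i # is) f x - c * Dl (i # is) g x"
        using d[OF that] by (simp add: pd_diff pd_mult pd_const)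
      finally show ?thesis .
    qed
    show ?case
    proof
      fix x assume x: "x \<in> U"
      have dd: "(\<lambda>y. Dl (i # is) f y - c * Dl (i # is) g y) differentiable (at x)"
        using d[OF x] by (intro derivative_intros) auto
      have "Dl (i # is) (\<lambda>y. f y - c * g y) differentiable at x"
        by (rule diff_local[OF U x _ dd]) (rule e)
      then show "Dl (i # is) (\<lambda>y. f y - c * g y) x = Dl (i # is) f x - c * Dl (i # is) g x \<and>
        Dl (i # is) (\<lambda>y. f y - c * g y) differentiable at x"
        using e[OF x] by blast
    qed
  qed
  then show ?thesis unfolding cinf_on_def by blast
qed

lemma line_deriv:
  fixes f :: "'a::real_normed_vector \<Rightarrow> real"
  assumes "f differentiable (at (a + s *\<^sub>R v))"
  shows "((\<lambda>t. f (a + t *\<^sub>R v)) has_derivative (\<lambda>t. t * frechet_derivative f (at (a + s *\<^sub>R v)) v)) (at s)"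
proof -
  have g: "((\<lambda>t. a + t *\<^sub>R v) has_derivative (\<lambda>t. t *\<^sub>R v)) (at s)"
    by (auto intro!: derivative_eq_intros)
  have F: "(f has_derivative frechet_derivative f (at (a + s *\<^sub>R v))) (at (a + s *\<^sub>R v))"
    using assms frechet_derivative_works by blast
  have bl: "bounded_linear (frechet_derivative f (at (a + s *\<^sub>R v)))"
    using F has_derivative_bounded_linear by blast
  have "((\<lambda>t. f (a + t *\<^sub>R v)) has_derivative (\<lambda>t. frechet_derivative f (at (a + s *\<^sub>R v)) (t *\<^sub>R v))) (at s)"
    using has_derivative_compose[OF g F] by simp
  moreover have "(\<lambda>t. frechet_derivative f (at (a + s *\<^sub>R v)) (t *\<^sub>R v)) = (\<lambda>t. t * frechet_derivative f (at (a + s *\<^sub>R v)) v)"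
    using linear_cmul[OF bounded_linear.linear[OF bl]] by simp
  ultimately show ?thesis by simp
qed

lemma schwarz_est:
  fixes f :: "real^'n::finite \<Rightarrow> real"
  assumes U: "open U" and x: "x \<in> U" and fd: "\<And>y. y \<in> U \<Longrightarrow> f differentiable (at y)"
    and di: "pd i f differentiable (at x)" and e: "e > 0"
  shows "\<exists>\<delta>>0. \<forall>h. 0 < h \<and> h < \<delta> \<longrightarrow>
     \<bar>(f ((x + h *\<^sub>R axis j 1) + h *\<^sub>R axis i 1) - f (x + h *\<^sub>R axis i 1) - f (x + h *\<^sub>R axis j 1) + f x)
       - h^2 * pd j (pd i f) x\<bar> \<le> 3 * e * h^2"
proof -
  define ei :: "real^'n" where "ei = axis i 1"
  define ej :: "real^'n" where "ej = axis j 1"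
  have nei: "norm ei = 1" and nej: "norm ej = 1" unfolding ei_def ej_def by (simp_all add: norm_axis_1)
  obtain r where r: "r > 0" "ball x r \<subseteq> U" using U x open_contains_ball by blast
  define D where "D = frechet_derivative (pd i f) (at x)"
  have Dh: "(pd i f has_derivative D) (at x)" unfolding D_def using di frechet_derivative_works by blast
  have bl: "bounded_linear D" using Dh has_derivative_bounded_linear by blast
  have pdj: "pd j (pd i f) x = D ej" using pd_has[OF Dh] unfolding ej_def .
  obtain d where d: "d > 0" "\<And>y. norm (y - x) < d \<Longrightarrow> \<bar>pd i f y - pd i f x - D (y - x)\<bar> \<le> e * norm (y - x)"
    using Dh[unfolded has_derivative_at_alt] e by (metis real_norm_def)
  define \<delta> where "\<delta> = min (r/2) (d/2)"
  have "\<delta> > 0" using r d by (simp add: \<delta>_def)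
  moreover have "\<bar>(f ((x + h *\<^sub>R ej) + h *\<^sub>R ei) - f (x + h *\<^sub>R ei) - f (x + h *\<^sub>R ej) + f x)
       - h^2 * D ej\<bar> \<le> 3 * e * h^2" if h: "0 < h" "h < \<delta>" for h
  proof -
    define \<phi> where "\<phi> s = f ((x + h *\<^sub>R ej) + s *\<^sub>R ei) - f (x + s *\<^sub>R ei)" for s
    have inb: "(x + h *\<^sub>R ej) + s *\<^sub>R ei \<in> U \<and> x + s *\<^sub>R ei \<in> U" if "0 \<le> s" "s \<le> h" for s
    proof -
      have "norm (h *\<^sub>R ej + s *\<^sub>R ei) \<le> h + s"
        using norm_triangle_ineq[of "h *\<^sub>R ej" "s *\<^sub>R ei"] nei nej that h by simp
      moreover have "norm (s *\<^sub>R ei) \<le> s" using nei that by simp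
      ultimately have "dist ((x + h *\<^sub>R ej) + s *\<^sub>R ei) x < r" "dist (x + s *\<^sub>R ei) x < r"
        using that h r by (simp_all add: dist_norm \<delta>_def add.assoc)
      then have "(x + h *\<^sub>R ej) + s *\<^sub>R ei \<in> ball x r" "x + s *\<^sub>R ei \<in> ball x r"
        by (simp_all add: mem_ball dist_commute)
      then show ?thesis using r by auto
    qed
    have der: "(\<phi> has_derivative (\<lambda>t. t * (pd i f ((x + h *\<^sub>R ej) + s *\<^sub>R ei) - pd i f (x + s *\<^sub>R ei)))) (at s within {0..h})"
      if "0 \<le> s" "s \<le> h" for s
    proof -
      have a: "((\<lambda>t. f ((x + h *\<^sub>R ej) + t *\<^sub>R ei)) has_derivative (\<lambda>t. t * pd i f ((x + h *\<^sub>R ej) + s *\<^sub>R ei))) (at s)"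
        using line_deriv[of f "x + h *\<^sub>R ej" s ei] inb[OF that] fd unfolding pd_def ei_def by auto
      have b: "((\<lambda>t. f (x + t *\<^sub>R ei)) has_derivative (\<lambda>t. t * pd i f (x + s *\<^sub>R ei))) (at s)"
        using line_deriv[of f x s ei] inb[OF that] fd unfolding pd_def ei_def by auto
      have "(\<phi> has_derivative (\<lambda>t. t * pd i f ((x + h *\<^sub>R ej) + s *\<^sub>R ei) - t * pd i f (x + s *\<^sub>R ei))) (at s)"
        unfolding \<phi>_def by (rule has_derivative_diff[OF a b])
      then show ?thesis by (simp add: right_diff_distrib has_derivative_at_withinI)
    qed
    obtain \<xi> where \<xi>: "\<xi> \<in> {0..h}" "\<phi> h - \<phi> 0 = (h - 0) * (pd i f ((x + h *\<^sub>R ej) + \<xi> *\<^sub>R ei) - pd i f (x + \<xi> *\<^sub>R ei))"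
      using mvt_very_simple[of 0 h \<phi>, OF _ der] h by auto
    define y1 where "y1 = (x + h *\<^sub>R ej) + \<xi> *\<^sub>R ei"
    define y2 where "y2 = x + \<xi> *\<^sub>R ei"
    have n1: "norm (y1 - x) \<le> 2 * h"
    proof -
      have "norm (y1 - x) \<le> h + \<xi>"
        using norm_triangle_ineq[of "h *\<^sub>R ej" "\<xi> *\<^sub>R ei"] nei nej \<xi> h unfolding y1_def by (simp add: algebra_simps)
      then show ?thesis using \<xi> by simp
    qed
    have n2: "norm (y2 - x) \<le> h" using nei \<xi> unfolding y2_def by simp
    have E1: "\<bar>pd i f y1 - pd i f x - D (y1 - x)\<bar> \<le> e * (2 * h)"
    proof -
      have "norm (y1 - x) < d" using n1 h by (simp add: \<delta>_def)
      then have "\<bar>pd i f y1 - pd i f x - D (y1 - x)\<bar> \<le> e * norm (y1 - x)" by (rule d(2))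
      also have "\<dots> \<le> e * (2 * h)" using n1 e by (intro mult_left_mono) auto
      finally show ?thesis .
    qed
    have E2: "\<bar>pd i f y2 - pd i f x - D (y2 - x)\<bar> \<le> e * h"
    proof -
      have "norm (y2 - x) < d" using n2 h by (simp add: \<delta>_def)
      then have "\<bar>pd i f y2 - pd i f x - D (y2 - x)\<bar> \<le> e * norm (y2 - x)" by (rule d(2))
      also have "\<dots> \<le> e * h" using n2 e by (intro mult_left_mono) auto
      finally show ?thesis .
    qed
    have Dlin: "D (y1 - x) - D (y2 - x) = h * D ej"
    proof -
      have "D (y1 - x) - D (y2 - x) = D ((y1 - x) - (y2 - x))" using linear_diff[OF bounded_linear.linear[OF bl]] by simp
      also have "(y1 - x) - (y2 - x) = h *\<^sub>R ej" unfolding y1_def y2_def by (simp add: algebra_simps)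
      finally show ?thesis using linear_cmul[OF bounded_linear.linear[OF bl]] by simp
    qed
    have eqF: "f ((x + h *\<^sub>R ej) + h *\<^sub>R ei) - f (x + h *\<^sub>R ei) - f (x + h *\<^sub>R ej) + f x = h * (pd i f y1 - pd i f y2)"
      using \<xi>(2) unfolding \<phi>_def y1_def y2_def by simp
    have DL: "D (y1 - x) = D (y2 - x) + h * D ej" using Dlin by simp
    have "(f ((x + h *\<^sub>R ej) + h *\<^sub>R ei) - f (x + h *\<^sub>R ei) - f (x + h *\<^sub>R ej) + f x) - h^2 * D ej
        = h * ((pd i f y1 - pd i f x - D (y1 - x)) - (pd i f y2 - pd i f x - D (y2 - x)))"
      unfolding eqF DL power2_eq_square by (simp add: algebra_simps)
    then have "\<bar>(f ((x + h *\<^sub>R ej) + h *\<^sub>R ei) - f (x + h *\<^sub>R ei) - f (x + h *\<^sub>R ej) + f x) - h^2 * D ej\<bar>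
        = h * \<bar>(pd i f y1 - pd i f x - D (y1 - x)) - (pd i f y2 - pd i f x - D (y2 - x))\<bar>"
      using h by (simp add: abs_mult)
    also have "\<dots> \<le> h * (e * (2 * h) + e * h)"
      using E1 E2 h by (intro mult_left_mono) auto
    finally show ?thesis by (simp add: power2_eq_square algebra_simps)
  qed
  ultimately show ?thesis unfolding pdj ej_def ei_def by blast
qed

lemma schwarz:
  fixes f :: "real^'n::finite \<Rightarrow> real"
  assumes U: "open U" and x: "x \<in> U" and fd: "\<And>y. y \<in> U \<Longrightarrow> f differentiable (at y)"
    and di: "pd i f differentiable (at x)" and dj: "pd j f differentiable (at x)"
  shows "pd j (pd i f) x = pd i (pd j f) x"
proof (rule ccontr)
  let ?A = "pd j (pd i f) x" and ?B = "pd i (pd j f) x"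
  assume ne: "?A \<noteq> ?B"
  define e where "e = \<bar>?A - ?B\<bar> / 12"
  have e: "e > 0" using ne by (simp add: e_def)
  obtain d1 where d1: "d1 > 0" "\<And>h. 0 < h \<Longrightarrow> h < d1 \<Longrightarrow>
     \<bar>(f ((x + h *\<^sub>R axis j 1) + h *\<^sub>R axis i 1) - f (x + h *\<^sub>R axis i 1) - f (x + h *\<^sub>R axis j 1) + f x)
       - h^2 * ?A\<bar> \<le> 3 * e * h^2"
    using schwarz_est[OF U x fd di e, of j] by blast
  obtain d2 where d2: "d2 > 0" "\<And>h. 0 < h \<Longrightarrow> h < d2 \<Longrightarrow>
     \<bar>(f ((x + h *\<^sub>R axis i 1) + h *\<^sub>R axis j 1) - f (x + h *\<^sub>R axis j 1) - f (x + h *\<^sub>R axis i 1) + f x)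
       - h^2 * ?B\<bar> \<le> 3 * e * h^2"
    using schwarz_est[OF U x fd dj e, of i] by blast
  define h where "h = min d1 d2 / 2"
  have h: "0 < h" "h < d1" "h < d2" using d1 d2 by (auto simp: h_def)
  have sw: "(x + h *\<^sub>R axis i 1) + h *\<^sub>R axis j 1 = (x + h *\<^sub>R axis j 1) + h *\<^sub>R axis i 1"
    by (simp add: algebra_simps)
  have "\<bar>h^2 * ?A - h^2 * ?B\<bar> \<le> 6 * e * h^2"
    using d1(2)[OF h(1,2)] d2(2)[OF h(1,3)] unfolding sw by linarith
  then have "h^2 * \<bar>?A - ?B\<bar> \<le> h^2 * (6 * e)"
  proof -
    have "h^2 * \<bar>?A - ?B\<bar> = \<bar>h^2 * ?A - h^2 * ?B\<bar>" by (simp only: right_diff_distrib[symmetric] abs_mult) simp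
    with \<open>\<bar>h^2 * ?A - h^2 * ?B\<bar> \<le> 6 * e * h^2\<close> show ?thesis by (simp add: mult.commute)
  qed
  then have "\<bar>?A - ?B\<bar> \<le> 6 * e" using h by (simp add: mult_le_cancel_left)
  moreover have "\<And>t::real. t \<le> 6 * (t / 12) \<Longrightarrow> 0 < t / 12 \<Longrightarrow> False" by linarith
  ultimately show False using e unfolding e_def by blast
qed

definition Tj :: "('n::finite \<Rightarrow> 'n \<Rightarrow> real) \<Rightarrow> ('n \<Rightarrow> 'n \<Rightarrow> 'n \<Rightarrow> real) \<Rightarrow> ('n \<Rightarrow> 'n \<Rightarrow> real) \<Rightarrow> ('n \<Rightarrow> 'n \<Rightarrow> 'n \<Rightarrow> real) \<Rightarrow> 'n \<Rightarrow> 'n \<Rightarrow> 'n \<Rightarrow> real" where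
  "Tj A dA B dB i j k = (\<Sum>l\<in>UNIV. A l i * dB l j k + B l i * dA l j k)"

definition Sj :: "('n::finite \<Rightarrow> 'n \<Rightarrow> real) \<Rightarrow> ('n \<Rightarrow> 'n \<Rightarrow> 'n \<Rightarrow> real) \<Rightarrow> ('n \<Rightarrow> 'n \<Rightarrow> real) \<Rightarrow> ('n \<Rightarrow> 'n \<Rightarrow> 'n \<Rightarrow> real) \<Rightarrow> 'n \<Rightarrow> 'n \<Rightarrow> 'n \<Rightarrow> real" where
  "Sj A dA B dB i j k = Tj A dA B dB i j k + Tj A dA B dB j k i + Tj A dA B dB k i j"

definition Lj :: "('n::finite \<Rightarrow> real) \<Rightarrow> ('n \<Rightarrow> 'n \<Rightarrow> real) \<Rightarrow> ('n \<Rightarrow> 'n \<Rightarrow> real) \<Rightarrow> ('n \<Rightarrow> 'n \<Rightarrow> 'n \<Rightarrow> real) \<Rightarrow> 'n \<Rightarrow> 'n \<Rightarrow> real" where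
  "Lj z dz p dp i j = (\<Sum>l\<in>UNIV. z l * dp l i j - p l j * dz l i - p i l * dz l j)"

definition W3 :: "('n \<Rightarrow> real) \<Rightarrow> ('n \<Rightarrow> 'n \<Rightarrow> real) \<Rightarrow> 'n \<Rightarrow> 'n \<Rightarrow> 'n \<Rightarrow> real" where
  "W3 X B i j k = X i * B j k + X j * B k i + X k * B i j"

lemma Tj_lin:
  fixes A :: "'n::finite \<Rightarrow> 'n \<Rightarrow> real" and W :: "'k::finite \<Rightarrow> 'n \<Rightarrow> 'n \<Rightarrow> real"
  shows "Tj (\<lambda>i j. A i j - (\<Sum>a\<in>UNIV. W a i j)) (\<lambda>l i j. dA l i j - (\<Sum>a\<in>UNIV. dW a l i j)) p dp i j k
    = Tj A dA p dp i j k - (\<Sum>a\<in>UNIV. Tj (W a) (dW a) p dp i j k)"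
proof -
  have "Tj (\<lambda>i j. A i j - (\<Sum>a\<in>UNIV. W a i j)) (\<lambda>l i j. dA l i j - (\<Sum>a\<in>UNIV. dW a l i j)) p dp i j k
     = Tj A dA p dp i j k - (\<Sum>l\<in>UNIV. \<Sum>a\<in>UNIV. W a l i * dp l j k + p l i * dW a l j k)"
    unfolding Tj_def
    by (simp add: algebra_simps sum_subtractf sum.distrib sum_distrib_left sum_distrib_right)
  also have "(\<Sum>l\<in>UNIV. \<Sum>a\<in>UNIV. W a l i * dp l j k + p l i * dW a l j k)
     = (\<Sum>a\<in>UNIV. Tj (W a) (dW a) p dp i j k)"
    unfolding Tj_def by (rule sum.swap)
  finally show ?thesis .
qed

lemma Sj_lin:
  fixes A :: "'n::finite \<Rightarrow> 'n \<Rightarrow> real" and W :: "'k::finite \<Rightarrow> 'n \<Rightarrow> 'n \<Rightarrow> real"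
  shows "Sj (\<lambda>i j. A i j - (\<Sum>a\<in>UNIV. W a i j)) (\<lambda>l i j. dA l i j - (\<Sum>a\<in>UNIV. dW a l i j)) p dp i j k
    = Sj A dA p dp i j k - (\<Sum>a\<in>UNIV. Sj (W a) (dW a) p dp i j k)"
  unfolding Sj_def Tj_lin by (simp add: sum.distrib algebra_simps)

lemma Sj_wedge:
  fixes p :: "'n::finite \<Rightarrow> 'n \<Rightarrow> real"
  assumes ap: "\<And>i j. p i j = - p j i"
  shows "Sj (\<lambda>i j. X i * z j - X j * z i) (\<lambda>l i j. dX l i * z j + X i * dz l j - dX l j * z i - X j * dz l i) p dp i j k
    = W3 z (Lj X dX p dp) i j k - W3 X (Lj z dz p dp) i j k"
proof -
  show ?thesis
    unfolding Sj_def Tj_def W3_def Lj_def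
    apply (simp only: sum_distrib_left sum_subtractf[symmetric] sum.distrib[symmetric])
    apply (rule sum.cong[OF refl])
    subgoal for l using ap[of i l] ap[of j l] ap[of k l] by (simp add: algebra_simps)
    done
qed


lemma Lj_X_zero:
  fixes p q :: "'n::finite \<Rightarrow> 'n \<Rightarrow> real"
  assumes ap: "\<And>i j. p i j = - p j i" and aq: "\<And>i j. q i j = - q j i"
    and adp: "\<And>l i j. dp l i j = - dp l j i" and adq: "\<And>l i j. dq l i j = - dq l j i"
    and hs: "\<And>l m. hh l m = hh m l"
    and Pdh: "\<And>i. (\<Sum>m\<in>UNIV. p i m * h m) = 0"
    and dPdh: "\<And>l i. (\<Sum>m\<in>UNIV. dp l i m * h m + p i m * hh l m) = 0"
    and S0: "\<And>i j k. Sj q dq p dp i j k = 0"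
  shows "Lj (\<lambda>i. \<Sum>m\<in>UNIV. q i m * h m) (\<lambda>l i. \<Sum>m\<in>UNIV. dq l i m * h m + q i m * hh l m) p dp j k = 0"
proof -
  have H1: "(\<Sum>l\<in>UNIV. \<Sum>m\<in>UNIV. p l k * (q j m * hh l m)) = (\<Sum>l\<in>UNIV. \<Sum>m\<in>UNIV. q j l * dp l k m * h m)"
  proof -
    have "(\<Sum>l\<in>UNIV. \<Sum>m\<in>UNIV. p l k * (q j m * hh l m)) = (\<Sum>m\<in>UNIV. q j m * (\<Sum>l\<in>UNIV. - p k l * hh m l))"
      apply (subst sum.swap)
      apply (simp only: sum_distrib_left)
      apply (rule sum.cong[OF refl])+
      subgoal for m l using ap[of l k] hs[of l m] by (simp add: algebra_simps)
      done
    also have "\<dots> = (\<Sum>m\<in>UNIV. q j m * (\<Sum>l\<in>UNIV. dp m k l * h l))"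
    proof (rule sum.cong, rule refl)
      fix m
      have "(\<Sum>l\<in>UNIV. - p k l * hh m l) = (\<Sum>l\<in>UNIV. dp m k l * h l)"
        using dPdh[of m k] by (simp add: sum.distrib sum_negf eq_neg_iff_add_eq_0 add.commute)
      then show "q j m * (\<Sum>l\<in>UNIV. - p k l * hh m l) = q j m * (\<Sum>l\<in>UNIV. dp m k l * h l)" by simp
    qed
    also have "\<dots> = (\<Sum>l\<in>UNIV. \<Sum>m\<in>UNIV. q j l * dp l k m * h m)"
      by (simp add: sum_distrib_left algebra_simps)
    finally show ?thesis .
  qed
  have H2: "(\<Sum>l\<in>UNIV. \<Sum>m\<in>UNIV. p j l * (q k m * hh l m)) = - (\<Sum>l\<in>UNIV. \<Sum>m\<in>UNIV. q k l * dp l j m * h m)"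
  proof -
    have "(\<Sum>l\<in>UNIV. \<Sum>m\<in>UNIV. p j l * (q k m * hh l m)) = (\<Sum>m\<in>UNIV. q k m * (\<Sum>l\<in>UNIV. p j l * hh m l))"
      apply (subst sum.swap)
      apply (simp only: sum_distrib_left)
      apply (rule sum.cong[OF refl])+
      subgoal for m l using hs[of l m] by (simp add: algebra_simps)
      done
    also have "\<dots> = (\<Sum>m\<in>UNIV. q k m * (- (\<Sum>l\<in>UNIV. dp m j l * h l)))"
    proof (rule sum.cong, rule refl)
      fix m
      have "(\<Sum>l\<in>UNIV. p j l * hh m l) = - (\<Sum>l\<in>UNIV. dp m j l * h l)"
        using dPdh[of m j] by (simp add: sum.distrib eq_neg_iff_add_eq_0 add.commute)
      then show "q k m * (\<Sum>l\<in>UNIV. p j l * hh m l) = q k m * (- (\<Sum>l\<in>UNIV. dp m j l * h l))" by simp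
    qed
    also have "\<dots> = - (\<Sum>l\<in>UNIV. \<Sum>m\<in>UNIV. q k l * dp l j m * h m)"
      by (simp add: sum_distrib_left sum_negf algebra_simps)
    finally show ?thesis .
  qed
  have L: "Lj (\<lambda>i. \<Sum>m\<in>UNIV. q i m * h m) (\<lambda>l i. \<Sum>m\<in>UNIV. dq l i m * h m + q i m * hh l m) p dp j k
     = (\<Sum>l\<in>UNIV. \<Sum>m\<in>UNIV. q l m * h m * dp l j k - p l k * dq l j m * h m - p j l * dq l k m * h m)
       - (\<Sum>l\<in>UNIV. \<Sum>m\<in>UNIV. p l k * (q j m * hh l m)) - (\<Sum>l\<in>UNIV. \<Sum>m\<in>UNIV. p j l * (q k m * hh l m))"
    unfolding Lj_def
    by (simp add: sum_distrib_left sum_distrib_right sum_subtractf[symmetric] sum.distrib[symmetric] algebra_simps)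
  have R: "(\<Sum>l\<in>UNIV. \<Sum>m\<in>UNIV. q l m * h m * dp l j k - p l k * dq l j m * h m - p j l * dq l k m * h m)
       - (\<Sum>l\<in>UNIV. \<Sum>m\<in>UNIV. q j l * dp l k m * h m) + (\<Sum>l\<in>UNIV. \<Sum>m\<in>UNIV. q k l * dp l j m * h m)
     = (\<Sum>m\<in>UNIV. h m * Sj q dq p dp j k m) - (\<Sum>l\<in>UNIV. (\<Sum>m\<in>UNIV. p l m * h m) * dq l j k)"
  proof -
    have "(\<Sum>m\<in>UNIV. h m * Sj q dq p dp j k m) = (\<Sum>l\<in>UNIV. \<Sum>m\<in>UNIV. h m * (q l j * dp l k m + p l j * dq l k m
        + (q l k * dp l m j + p l k * dq l m j) + (q l m * dp l j k + p l m * dq l j k)))"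
      unfolding Sj_def Tj_def
      by (subst sum.swap) (simp add: sum_distrib_left sum.distrib[symmetric] algebra_simps)
    then show ?thesis
      apply (simp only: sum_distrib_right sum_subtractf[symmetric] sum.distrib[symmetric])
      apply (rule sum.cong[OF refl])+
      subgoal for l m using aq[of j l] aq[of k l] adp[of l j m] ap[of j l] adq[of l j m]
        by (simp add: algebra_simps)
      done
  qed
  show ?thesis
    using L R H1 H2 by (simp add: S0 Pdh)
qed

lemma sum_rev_atMost: "(\<Sum>t\<le>n. f t) = (\<Sum>j\<le>n. f (n - j))" for f :: "nat \<Rightarrow> real"
  by (rule sum.reindex_bij_witness[where i="\<lambda>j. n - j" and j="\<lambda>t. n - t"]) auto

lemma poly_top:
  fixes A B :: "nat \<Rightarrow> real"
  assumes H: "\<And>lam. (\<Sum>t\<le>n. (A t - lam * B t) * lam ^ (n - t)) = 0"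
  shows "B 0 = 0"
proof -
  define c where "c j = (if j \<le> n then A (n - j) else 0) - (if j = 0 then 0 else B (n + 1 - j))" for j
  have "(\<Sum>j\<le>Suc n. c j * lam ^ j) = 0" for lam
  proof -
    have e1: "(\<Sum>j\<le>Suc n. (if j \<le> n then A (n - j) else 0) * lam ^ j) = (\<Sum>t\<le>n. A t * lam ^ (n - t))"
    proof -
      have "(\<Sum>j\<le>Suc n. (if j \<le> n then A (n - j) else 0) * lam ^ j) = (\<Sum>j\<le>n. (if j \<le> n then A (n - j) else 0) * lam ^ j)"
        by (simp only: sum.atMost_Suc) simp
      also have "\<dots> = (\<Sum>j\<le>n. A (n - j) * lam ^ j)"
        by (rule sum.cong) auto
      also have "\<dots> = (\<Sum>j\<le>n. A (n - j) * lam ^ (n - (n - j)))"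
        by (rule sum.cong) auto
      also have "\<dots> = (\<Sum>t\<le>n. A t * lam ^ (n - t))"
        by (rule sum_rev_atMost[symmetric])
      finally show ?thesis .
    qed
    have e2: "(\<Sum>j\<le>Suc n. (if j = 0 then 0 else B (n + 1 - j)) * lam ^ j) = (\<Sum>t\<le>n. lam * B t * lam ^ (n - t))"
    proof -
      have "(\<Sum>j\<le>Suc n. (if j = 0 then 0 else B (n + 1 - j)) * lam ^ j) = (\<Sum>j\<le>n. B (n - j) * lam ^ Suc j)"
        by (subst sum.atMost_Suc_shift) simp
      also have "\<dots> = (\<Sum>t\<le>n. lam * B t * lam ^ (n - t))"
      proof -
        have "(\<Sum>j\<le>n. B (n - j) * lam ^ Suc j) = (\<Sum>j\<le>n. lam * B (n - j) * lam ^ (n - (n - j)))"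
          by (rule sum.cong) (auto simp: algebra_simps)
        also have "\<dots> = (\<Sum>t\<le>n. lam * B t * lam ^ (n - t))"
          by (rule sum_rev_atMost[where f="\<lambda>t. lam * B t * lam ^ (n - t)", symmetric])
        finally show ?thesis .
      qed
      finally show ?thesis .
    qed
    have "(\<Sum>j\<le>Suc n. c j * lam ^ j) = (\<Sum>j\<le>Suc n. (if j \<le> n then A (n - j) else 0) * lam ^ j)
        - (\<Sum>j\<le>Suc n. (if j = 0 then 0 else B (n + 1 - j)) * lam ^ j)"
      unfolding c_def by (simp add: left_diff_distrib sum_subtractf)
    also have "\<dots> = (\<Sum>t\<le>n. (A t - lam * B t) * lam ^ (n - t))"
      unfolding e1 e2 by (simp add: left_diff_distrib sum_subtractf)
    finally show ?thesis using H by simp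
  qed
  then have "\<forall>j\<le>Suc n. c j = 0" using polyfun_eq_0[of c "Suc n"] by blast
  then have "c (Suc n) = 0" by blast
  then show ?thesis by (simp add: c_def)
qed

lemma pd_cmult: "g differentiable (at x) \<Longrightarrow> pd l (\<lambda>y. c * g y) x = c * pd l g x"
  by (subst pd_mult) (auto simp: pd_const)

lemma pd_multc: "g differentiable (at x) \<Longrightarrow> pd l (\<lambda>y. g y * c) x = pd l g x * c"
  by (subst pd_mult) (auto simp: pd_const)

lemma schouten_jet: "schouten A B x i j k = Sj (\<lambda>i j. A x $ i $ j) (\<lambda>l i j. pd l (\<lambda>y. A y $ i $ j) x)
   (\<lambda>i j. B x $ i $ j) (\<lambda>l i j. pd l (\<lambda>y. B y $ i $ j) x) i j k"
  unfolding schouten_def Sj_def Tj_def Let_def by simp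

lemma Sj_pencil: "Sj (\<lambda>i j. a i j - c * b i j) (\<lambda>l i j. da l i j - c * db l i j)
     (\<lambda>i j. a i j - c * b i j) (\<lambda>l i j. da l i j - c * db l i j) i j k
   = Sj a da a da i j k - 2 * c * Sj a da b db i j k + c^2 * Sj b db b db i j k"
  unfolding Sj_def Tj_def
  apply (simp only: sum_distrib_left sum_subtractf[symmetric] sum.distrib[symmetric])
  apply (rule sum.cong[OF refl])
  apply (simp add: algebra_simps power2_eq_square)
  done

lemma Sj_sym: "Sj b db a da i j k = Sj a da b db i j k"
  unfolding Sj_def Tj_def by (simp add: add.commute)

lemma schouten_pencil:
  assumes "\<And>i j. (\<lambda>y. A y $ i $ j) differentiable (at x)" "\<And>i j. (\<lambda>y. B y $ i $ j) differentiable (at x)"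
  shows "schouten (\<lambda>y. A y - c *\<^sub>R B y) (\<lambda>y. A y - c *\<^sub>R B y) x i j k
     = schouten A A x i j k - 2 * c * schouten A B x i j k + c^2 * schouten B B x i j k"
proof -
  have 1: "(\<lambda>i j. (A x - c *\<^sub>R B x) $ i $ j) = (\<lambda>i j. A x $ i $ j - c * B x $ i $ j)" by simp
  have 2: "(\<lambda>l i j. pd l (\<lambda>y. (A y - c *\<^sub>R B y) $ i $ j) x)
      = (\<lambda>l i j. pd l (\<lambda>y. A y $ i $ j) x - c * pd l (\<lambda>y. B y $ i $ j) x)"
    using assms by (simp add: pd_diff pd_cmult)
  show ?thesis unfolding schouten_jet 1 2 Sj_pencil ..
qed

lemma swap_poly:
  fixes q p :: "'n::finite \<Rightarrow> real" and g :: "nat \<Rightarrow> 'n \<Rightarrow> real"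
  shows "(\<Sum>s\<in>UNIV. (q s - lam * p s) * (\<Sum>t\<le>n. g t s * lam ^ (n - t)))
    = (\<Sum>t\<le>n. ((\<Sum>s\<in>UNIV. q s * g t s) - lam * (\<Sum>s\<in>UNIV. p s * g t s)) * lam ^ (n - t))"
proof -
  have "(\<Sum>s\<in>UNIV. (q s - lam * p s) * (\<Sum>t\<le>n. g t s * lam ^ (n - t)))
      = (\<Sum>s\<in>UNIV. \<Sum>t\<le>n. (q s * g t s - lam * (p s * g t s)) * lam ^ (n - t))"
    by (simp add: sum_distrib_left algebra_simps)
  also have "\<dots> = (\<Sum>t\<le>n. \<Sum>s\<in>UNIV. (q s * g t s - lam * (p s * g t s)) * lam ^ (n - t))"
    by (rule sum.swap)
  also have "\<dots> = (\<Sum>t\<le>n. ((\<Sum>s\<in>UNIV. q s * g t s) - lam * (\<Sum>s\<in>UNIV. p s * g t s)) * lam ^ (n - t))"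
    by (rule sum.cong[OF refl], simp only: sum_distrib_right[symmetric] sum_subtractf sum_distrib_left[symmetric])
  finally show ?thesis .
qed

lemma casimir_top:
  fixes P P' :: "real^'n::finite \<Rightarrow> real^'n^'n" and H :: "'k \<Rightarrow> nat \<Rightarrow> real^'n \<Rightarrow> real"
  assumes cas: "\<And>lam. sharp (\<lambda>y. P' y - lam *\<^sub>R P y) (casimir_poly H m a lam) x = 0"
    and dH: "\<And>t. t \<le> m a \<Longrightarrow> H a t differentiable (at x)"
  shows "(\<Sum>s\<in>UNIV. P x $ i $ s * pd s (H a 0) x) = 0"
proof (rule poly_top[where A="\<lambda>t. \<Sum>s\<in>UNIV. P' x $ i $ s * pd s (H a t) x"
     and B="\<lambda>t. \<Sum>s\<in>UNIV. P x $ i $ s * pd s (H a t) x" and n="m a", simplified])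
  fix lam
  have g: "pd s (casimir_poly H m a lam) x = (\<Sum>t\<le>m a. pd s (H a t) x * lam ^ (m a - t))" for s
  proof -
    have "casimir_poly H m a lam = (\<lambda>y. \<Sum>t\<le>m a. H a t y * lam ^ (m a - t))"
      by (rule ext) (simp add: casimir_poly_def)
    then have "pd s (casimir_poly H m a lam) x = (\<Sum>t\<le>m a. pd s (\<lambda>y. H a t y * lam ^ (m a - t)) x)"
      using dH by (simp, intro pd_sum) auto
    also have "\<dots> = (\<Sum>t\<le>m a. pd s (H a t) x * lam ^ (m a - t))"
      using dH by (intro sum.cong refl pd_multc) auto
    finally show ?thesis .
  qed
  have "0 = (sharp (\<lambda>y. P' y - lam *\<^sub>R P y) (casimir_poly H m a lam) x) $ i" using cas by simp
  also have "\<dots> = (\<Sum>s\<in>UNIV. (P' x $ i $ s - lam * P x $ i $ s) * (\<Sum>t\<le>m a. pd s (H a t) x * lam ^ (m a - t)))"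
    by (simp add: sharp_def grad_def matrix_vector_mult_def g)
  also have "\<dots> = (\<Sum>t\<le>m a. ((\<Sum>s\<in>UNIV. P' x $ i $ s * pd s (H a t) x) - lam * (\<Sum>s\<in>UNIV. P x $ i $ s * pd s (H a t) x)) * lam ^ (m a - t))"
    by (rule swap_poly)
  finally show "(\<Sum>t\<le>m a. ((\<Sum>s\<in>UNIV. P' x $ i $ s * pd s (H a t) x) - lam * (\<Sum>s\<in>UNIV. P x $ i $ s * pd s (H a t) x)) * lam ^ (m a - t)) = 0"
    by simp
qed

lemma pd_neg: "g differentiable (at x) \<Longrightarrow> pd l (\<lambda>y. - g y) x = - pd l g x"
  using pd_cmult[of g x l "-1"] by simp

theorem theorem1:
  fixes U :: "(real^'n::finite) set"
    and P P' Q :: "real^'n \<Rightarrow> real^'n^'n"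
    and H :: "'k::finite \<Rightarrow> nat \<Rightarrow> real^'n \<Rightarrow> real"
    and m :: "'k \<Rightarrow> nat"
    and Z Xp :: "'k \<Rightarrow> real^'n \<Rightarrow> real^'n"
  assumes U_open: "open U"
    and dim: "CARD('n) = 2 * (\<Sum>a\<in>UNIV. m a) + CARD('k)"
    and pencil: "\<And>lam. poisson_on U (\<lambda>x. P' x - lam *\<^sub>R P x)"
    and P_poisson: "poisson_on U P"
    and P'_poisson: "poisson_on U P'"
    and H_smooth: "\<And>a i. i \<le> m a \<Longrightarrow> cinf_on U (H a i)"
    and casimir: "\<And>a lam x. x \<in> U \<Longrightarrow>
        sharp (\<lambda>y. P' y - lam *\<^sub>R P y) (casimir_poly H m a lam) x = 0"
    and indep: "\<And>x c. x \<in> U \<Longrightarrow>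
        (\<Sum>a\<in>UNIV. \<Sum>i\<le>m a. c a i *\<^sub>R grad (H a i) x) = 0 \<Longrightarrow>
        (\<forall>a. \<forall>i\<le>m a. c a i = 0)"
    and Z_smooth: "\<And>a. vfield_on U (Z a)"
    and Z_compl_span: "\<And>x v. x \<in> U \<Longrightarrow>
        \<exists>c \<alpha>. v = (\<Sum>a\<in>UNIV. c a *\<^sub>R Z a x) + P x *v \<alpha>"
    and Z_compl_indep: "\<And>x c \<alpha>. x \<in> U \<Longrightarrow>
        (\<Sum>a\<in>UNIV. c a *\<^sub>R Z a x) + P x *v \<alpha> = 0 \<Longrightarrow> (\<forall>a. c a = 0) \<and> P x *v \<alpha> = 0"
    and Z_norm: "\<And>a b x. x \<in> U \<Longrightarrow>
        Z a x \<bullet> grad (H b 0) x = (if a = b then 1 else 0)"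
    and Xp_def: "\<And>a. Xp a = sharp P' (H a 0)"
    and Q_def: "Q = (\<lambda>x. P' x - (\<Sum>a\<in>UNIV. wedge2 (Xp a) (Z a) x))"
    and Q_poisson: "poisson_on U Q"
  shows "(\<forall>x\<in>U. \<forall>i j k. schouten Q P x i j k
              = (\<Sum>a\<in>UNIV. wedge3 (Xp a) (lie_bv (Z a) P) x i j k))
       \<and> ((\<forall>lam. poisson_on U (\<lambda>x. Q x - lam *\<^sub>R P x))
            \<longleftrightarrow> (\<forall>x\<in>U. \<forall>i j k. (\<Sum>a\<in>UNIV. wedge3 (Xp a) (lie_bv (Z a) P) x i j k) = 0))"
proof -
  have Pc: "\<And>i j. cinf_on U (\<lambda>y. P y $ i $ j)" and Pa: "\<And>y i j. y \<in> U \<Longrightarrow> P y $ i $ j = - P y $ j $ i"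
    and PS: "\<And>y i j k. y \<in> U \<Longrightarrow> schouten P P y i j k = 0"
    using P_poisson unfolding poisson_on_def bivector_on_def by blast+
  have P'c: "\<And>i j. cinf_on U (\<lambda>y. P' y $ i $ j)" and P'a: "\<And>y i j. y \<in> U \<Longrightarrow> P' y $ i $ j = - P' y $ j $ i"
    and P'S: "\<And>y i j k. y \<in> U \<Longrightarrow> schouten P' P' y i j k = 0"
    using P'_poisson unfolding poisson_on_def bivector_on_def by blast+
  have Qc: "\<And>i j. cinf_on U (\<lambda>y. Q y $ i $ j)" and Qa: "\<And>y i j. y \<in> U \<Longrightarrow> Q y $ i $ j = - Q y $ j $ i"
    and QS: "\<And>y i j k. y \<in> U \<Longrightarrow> schouten Q Q y i j k = 0"
    using Q_poisson unfolding poisson_on_def bivector_on_def by blast+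
  have Zc: "\<And>a i. cinf_on U (\<lambda>y. Z a y $ i)" using Z_smooth unfolding vfield_on_def by blast
  have Hc: "\<And>a. cinf_on U (H a 0)" using H_smooth by simp
  have Hd: "\<And>a t y. y \<in> U \<Longrightarrow> t \<le> m a \<Longrightarrow> H a t differentiable (at y)"
    using H_smooth cinf_diff0 by blast
  have Pdh: "\<And>a y i. y \<in> U \<Longrightarrow> (\<Sum>s\<in>UNIV. P y $ i $ s * pd s (H a 0) y) = 0"
  proof -
    fix a y i assume y: "y \<in> U"
    show "(\<Sum>s\<in>UNIV. P y $ i $ s * pd s (H a 0) y) = 0"
      by (rule casimir_top[where P=P and P'=P' and H=H and m=m and a=a and x=y])
        (auto intro: casimir[OF y] Hd[OF y])
  qed
  have Xc: "\<And>a y i. Xp a y $ i = (\<Sum>m\<in>UNIV. P' y $ i $ m * pd m (H a 0) y)"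
    by (simp add: Xp_def sharp_def grad_def matrix_vector_mult_def)
  have Qeq: "\<And>y i j. Q y $ i $ j = P' y $ i $ j - (\<Sum>a\<in>UNIV. Xp a y $ i * Z a y $ j - Xp a y $ j * Z a y $ i)"
    by (simp add: Q_def wedge2_def sum_component)

  have part1: "\<forall>x\<in>U. \<forall>i j k. schouten Q P x i j k = (\<Sum>a\<in>UNIV. wedge3 (Xp a) (lie_bv (Z a) P) x i j k)"
  proof (intro ballI allI)
    fix x i j k assume x: "x \<in> U"
    define p where "p = (\<lambda>i j. P x $ i $ j)"
    define dp where "dp = (\<lambda>l i j. pd l (\<lambda>y. P y $ i $ j) x)"
    define q where "q = (\<lambda>i j. P' x $ i $ j)"
    define dq where "dq = (\<lambda>l i j. pd l (\<lambda>y. P' y $ i $ j) x)"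
    define z where "z = (\<lambda>a i. Z a x $ i)"
    define dz where "dz = (\<lambda>a l i. pd l (\<lambda>y. Z a y $ i) x)"
    define h where "h = (\<lambda>a m. pd m (H a 0) x)"
    define hh where "hh = (\<lambda>a l m. pd l (pd m (H a 0)) x)"
    define X where "X = (\<lambda>a i. \<Sum>m\<in>UNIV. q i m * h a m)"
    define dX where "dX = (\<lambda>a l i. \<Sum>m\<in>UNIV. dq l i m * h a m + q i m * hh a l m)"
    have dPx: "\<And>i j. (\<lambda>y. P y $ i $ j) differentiable (at x)" using Pc cinf_diff0 x by blast
    have dP'x: "\<And>i j. (\<lambda>y. P' y $ i $ j) differentiable (at x)" using P'c cinf_diff0 x by blast
    have dZx: "\<And>a i. (\<lambda>y. Z a y $ i) differentiable (at x)" using Zc cinf_diff0 x by blast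
    have dhx: "\<And>a m. pd m (H a 0) differentiable (at x)" using Hc cinf_diff1 x by blast
    have dXx: "\<And>a i. (\<lambda>y. Xp a y $ i) differentiable (at x)"
      unfolding Xc using dP'x dhx by (auto intro!: derivative_intros)
    have jX: "\<And>a i. Xp a x $ i = X a i" by (simp add: Xc X_def q_def h_def)
    have jdX: "\<And>a l i. pd l (\<lambda>y. Xp a y $ i) x = dX a l i"
    proof -
      fix a l i
      have "pd l (\<lambda>y. Xp a y $ i) x = pd l (\<lambda>y. \<Sum>m\<in>UNIV. P' y $ i $ m * pd m (H a 0) y) x"
        unfolding Xc ..
      also have "\<dots> = (\<Sum>m\<in>UNIV. pd l (\<lambda>y. P' y $ i $ m * pd m (H a 0) y) x)"
        using dP'x dhx by (intro pd_sum) (auto intro!: derivative_intros)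
      also have "\<dots> = dX a l i"
        unfolding dX_def dq_def q_def h_def hh_def using dP'x dhx by (intro sum.cong refl) (simp add: pd_mult)
      finally show "pd l (\<lambda>y. Xp a y $ i) x = dX a l i" .
    qed
    have jQ: "(\<lambda>i j. Q x $ i $ j) = (\<lambda>i j. q i j - (\<Sum>a\<in>UNIV. X a i * z a j - X a j * z a i))"
      by (intro ext) (simp add: Qeq jX q_def z_def)
    have jdQ: "(\<lambda>l i j. pd l (\<lambda>y. Q y $ i $ j) x) = (\<lambda>l i j. dq l i j -
        (\<Sum>a\<in>UNIV. dX a l i * z a j + X a i * dz a l j - dX a l j * z a i - X a j * dz a l i))"
    proof (intro ext)
      fix l i j
      have "pd l (\<lambda>y. Q y $ i $ j) x = pd l (\<lambda>y. P' y $ i $ j - (\<Sum>a\<in>UNIV. Xp a y $ i * Z a y $ j - Xp a y $ j * Z a y $ i)) x"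
        unfolding Qeq ..
      also have "\<dots> = dq l i j - pd l (\<lambda>y. \<Sum>a\<in>UNIV. Xp a y $ i * Z a y $ j - Xp a y $ j * Z a y $ i) x"
        unfolding dq_def using dP'x dXx dZx by (intro pd_diff) (auto intro!: derivative_intros)
      also have "pd l (\<lambda>y. \<Sum>a\<in>UNIV. Xp a y $ i * Z a y $ j - Xp a y $ j * Z a y $ i) x
          = (\<Sum>a\<in>UNIV. pd l (\<lambda>y. Xp a y $ i * Z a y $ j - Xp a y $ j * Z a y $ i) x)"
        using dXx dZx by (intro pd_sum) (auto intro!: derivative_intros)
      also have "\<dots> = (\<Sum>a\<in>UNIV. dX a l i * z a j + X a i * dz a l j - dX a l j * z a i - X a j * dz a l i)"
      proof (intro sum.cong refl)
        fix a
        have "pd l (\<lambda>y. Xp a y $ i * Z a y $ j - Xp a y $ j * Z a y $ i) x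
            = pd l (\<lambda>y. Xp a y $ i * Z a y $ j) x - pd l (\<lambda>y. Xp a y $ j * Z a y $ i) x"
          using dXx dZx by (intro pd_diff) (auto intro!: derivative_intros)
        also have "\<dots> = dX a l i * z a j + X a i * dz a l j - dX a l j * z a i - X a j * dz a l i"
          using dXx dZx by (simp add: pd_mult jdX jX z_def dz_def)
        finally show "pd l (\<lambda>y. Xp a y $ i * Z a y $ j - Xp a y $ j * Z a y $ i) x
            = dX a l i * z a j + X a i * dz a l j - dX a l j * z a i - X a j * dz a l i" .
      qed
      finally show "pd l (\<lambda>y. Q y $ i $ j) x = dq l i j -
        (\<Sum>a\<in>UNIV. dX a l i * z a j + X a i * dz a l j - dX a l j * z a i - X a j * dz a l i)" .
    qed
    have ap: "\<And>i j. p i j = - p j i" unfolding p_def using Pa x by blast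
    have aq: "\<And>i j. q i j = - q j i" unfolding q_def using P'a x by blast
    have adp: "\<And>l i j. dp l i j = - dp l j i"
    proof -
      fix l i j
      have "dp l i j = pd l (\<lambda>y. - P y $ j $ i) x"
        unfolding dp_def by (rule pd_local[OF U_open x]) (auto intro: Pa intro!: derivative_intros dPx)
      then show "dp l i j = - dp l j i" unfolding dp_def using pd_neg[OF dPx[of j i]] by simp
    qed
    have adq: "\<And>l i j. dq l i j = - dq l j i"
    proof -
      fix l i j
      have "dq l i j = pd l (\<lambda>y. - P' y $ j $ i) x"
        unfolding dq_def by (rule pd_local[OF U_open x]) (auto intro: P'a intro!: derivative_intros dP'x)
      then show "dq l i j = - dq l j i" unfolding dq_def using pd_neg[OF dP'x[of j i]] by simp
    qed
    have hs: "\<And>a l m. hh a l m = hh a m l"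
      unfolding hh_def using schwarz[OF U_open x] Hc cinf_diff0 cinf_diff1 x by blast
    have Pdhx: "\<And>a i. (\<Sum>m\<in>UNIV. p i m * h a m) = 0"
      unfolding p_def h_def using Pdh x by blast
    have dPdh: "\<And>a l i. (\<Sum>m\<in>UNIV. dp l i m * h a m + p i m * hh a l m) = 0"
    proof -
      fix a l i
      have "0 = pd l (\<lambda>y. 0) x" by (simp add: pd_const)
      also have "\<dots> = pd l (\<lambda>y. \<Sum>m\<in>UNIV. P y $ i $ m * pd m (H a 0) y) x"
        using Pdh dPx dhx by (intro pd_local[OF U_open x]) (auto intro!: derivative_intros)
      also have "\<dots> = (\<Sum>m\<in>UNIV. pd l (\<lambda>y. P y $ i $ m * pd m (H a 0) y) x)"
        using dPx dhx by (intro pd_sum) (auto intro!: derivative_intros)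
      also have "\<dots> = (\<Sum>m\<in>UNIV. dp l i m * h a m + p i m * hh a l m)"
        unfolding dp_def p_def h_def hh_def using dPx dhx by (intro sum.cong refl) (simp add: pd_mult)
      finally show "(\<Sum>m\<in>UNIV. dp l i m * h a m + p i m * hh a l m) = 0" by simp
    qed
    have S0: "\<And>i j k. Sj q dq p dp i j k = 0"
    proof -
      fix i j k
      have "0 = schouten (\<lambda>y. P' y - 1 *\<^sub>R P y) (\<lambda>y. P' y - 1 *\<^sub>R P y) x i j k"
        using pencil[of 1] x unfolding poisson_on_def by auto
      also have "\<dots> = schouten P' P' x i j k - 2 * 1 * schouten P' P x i j k + 1^2 * schouten P P x i j k"
        using dP'x dPx by (rule schouten_pencil)
      finally have "schouten P' P x i j k = 0" using PS[OF x] P'S[OF x] by simp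
      then show "Sj q dq p dp i j k = 0" unfolding schouten_jet q_def dq_def p_def dp_def .
    qed
    have LX0: "\<And>a j k. Lj (X a) (dX a) p dp j k = 0"
      unfolding X_def dX_def
      by (rule Lj_X_zero[OF ap aq adp adq hs Pdhx dPdh S0])
    have "schouten Q P x i j k = Sj (\<lambda>i j. q i j - (\<Sum>a\<in>UNIV. X a i * z a j - X a j * z a i))
        (\<lambda>l i j. dq l i j - (\<Sum>a\<in>UNIV. dX a l i * z a j + X a i * dz a l j - dX a l j * z a i - X a j * dz a l i))
        p dp i j k"
      unfolding schouten_jet jQ jdQ p_def dp_def ..
    also have "\<dots> = Sj q dq p dp i j k - (\<Sum>a\<in>UNIV. Sj (\<lambda>i j. X a i * z a j - X a j * z a i)
        (\<lambda>l i j. dX a l i * z a j + X a i * dz a l j - dX a l j * z a i - X a j * dz a l i) p dp i j k)"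
      by (rule Sj_lin[where W="\<lambda>a i j. X a i * z a j - X a j * z a i"
          and dW="\<lambda>a l i j. dX a l i * z a j + X a i * dz a l j - dX a l j * z a i - X a j * dz a l i"])
    also have "\<dots> = (\<Sum>a\<in>UNIV. W3 (X a) (Lj (z a) (dz a) p dp) i j k)"
      unfolding Sj_wedge[OF ap] S0 LX0
      by (simp add: W3_def flip: sum_negf) (simp add: algebra_simps)
    also have "\<dots> = (\<Sum>a\<in>UNIV. wedge3 (Xp a) (lie_bv (Z a) P) x i j k)"
      by (simp add: wedge3_def lie_bv_def W3_def Lj_def jX z_def dz_def p_def dp_def)
    finally show "schouten Q P x i j k = (\<Sum>a\<in>UNIV. wedge3 (Xp a) (lie_bv (Z a) P) x i j k)" .
  qed
  have QP: "\<And>x lam i j k. x \<in> U \<Longrightarrow> schouten (\<lambda>y. Q y - lam *\<^sub>R P y) (\<lambda>y. Q y - lam *\<^sub>R P y) x i j k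
      = - 2 * lam * schouten Q P x i j k"
  proof -
    fix x lam i j k assume x: "x \<in> U"
    have "schouten (\<lambda>y. Q y - lam *\<^sub>R P y) (\<lambda>y. Q y - lam *\<^sub>R P y) x i j k
      = schouten Q Q x i j k - 2 * lam * schouten Q P x i j k + lam^2 * schouten P P x i j k"
      using Qc Pc cinf_diff0 x by (intro schouten_pencil) blast+
    then show "schouten (\<lambda>y. Q y - lam *\<^sub>R P y) (\<lambda>y. Q y - lam *\<^sub>R P y) x i j k
      = - 2 * lam * schouten Q P x i j k" using QS[OF x] PS[OF x] by simp
  qed
  show ?thesis
  proof (intro conjI)
    show "\<forall>x\<in>U. \<forall>i j k. schouten Q P x i j k = (\<Sum>a\<in>UNIV. wedge3 (Xp a) (lie_bv (Z a) P) x i j k)"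
      by (rule part1)
    show "(\<forall>lam. poisson_on U (\<lambda>x. Q x - lam *\<^sub>R P x))
      \<longleftrightarrow> (\<forall>x\<in>U. \<forall>i j k. (\<Sum>a\<in>UNIV. wedge3 (Xp a) (lie_bv (Z a) P) x i j k) = 0)"
    proof
      assume all: "\<forall>lam. poisson_on U (\<lambda>x. Q x - lam *\<^sub>R P x)"
      show "\<forall>x\<in>U. \<forall>i j k. (\<Sum>a\<in>UNIV. wedge3 (Xp a) (lie_bv (Z a) P) x i j k) = 0"
      proof (intro ballI allI)
        fix x i j k assume x: "x \<in> U"
        have "schouten (\<lambda>y. Q y - 1 *\<^sub>R P y) (\<lambda>y. Q y - 1 *\<^sub>R P y) x i j k = 0"
          using all x unfolding poisson_on_def by blast
        then have "schouten Q P x i j k = 0" using QP[OF x, of 1] by simp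
        then show "(\<Sum>a\<in>UNIV. wedge3 (Xp a) (lie_bv (Z a) P) x i j k) = 0" using part1 x by simp
      qed
    next
      assume R0: "\<forall>x\<in>U. \<forall>i j k. (\<Sum>a\<in>UNIV. wedge3 (Xp a) (lie_bv (Z a) P) x i j k) = 0"
      show "\<forall>lam. poisson_on U (\<lambda>x. Q x - lam *\<^sub>R P x)"
      proof
        fix lam
        have c: "cinf_on U (\<lambda>y. (Q y - lam *\<^sub>R P y) $ i $ j)" for i j
        proof -
          have "(\<lambda>y. (Q y - lam *\<^sub>R P y) $ i $ j) = (\<lambda>y. Q y $ i $ j - lam * P y $ i $ j)" by simp
          then show ?thesis using cinf_lin[OF U_open Qc Pc] by simp
        qed
        have a: "\<forall>x\<in>U. \<forall>i j. (Q x - lam *\<^sub>R P x) $ i $ j = - (Q x - lam *\<^sub>R P x) $ j $ i"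
        proof (intro ballI allI)
          fix x i j assume x: "x \<in> U"
          show "(Q x - lam *\<^sub>R P x) $ i $ j = - (Q x - lam *\<^sub>R P x) $ j $ i"
            using Qa[OF x, of i j] Pa[OF x, of i j] by simp
        qed
        have s: "\<forall>x\<in>U. \<forall>i j k. schouten (\<lambda>x. Q x - lam *\<^sub>R P x) (\<lambda>x. Q x - lam *\<^sub>R P x) x i j k = 0"
          using QP part1 R0 by simp
        show "poisson_on U (\<lambda>x. Q x - lam *\<^sub>R P x)"
          unfolding poisson_on_def bivector_on_def using c a s by blast
      qed
    qed
  qed
qed

end
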